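(* Let $\mathbf{D}=\{(x_i,y_i):i=0,\dots,N\}$ and $\bar{\mathbf{D}}=\{(x_i,\bar y_i):i=0,\dots,N\}$ be two data sets with $x_0<x_1<\dots<x_N$, and let $f,\hat f\in C(I)$ with $f(x_i)=y_i$, $\hat f(x_i)=\bar y_i$. Let $b_r,\hat b_r\in C(I)$ ($r\in\mathbb{N}$) with $b_r(x_0)=f(x_0)$, $b_r(x_N)=f(x_N)$, $\hat b_r(x_0)=\hat f(x_0)$, $\hat b_r(x_N)=\hat f(x_N)$, $\sup_r\|b_r\|_\infty<\infty$, $\sup_r\|\hat b_r\|_\infty<\infty$. Let $f^\alpha_b$ be the non-stationary $\alpha$-fractal function of $f$ with base functions $b_r$, and $\bar f^\alpha_b$ the non-stationary $\alpha$-fractal function of $\hat f$ with base functions $\hat b_r$, both with the same scaling functions $\alpha_{i,r}$. Then $$\|f^\alpha_b-\bar f^\alpha_b\|_\infty\le\frac{\|f-\hat f\|_\infty+\|\alpha\|_\infty\sup_{r\in\mathbb{N}}\|b_r-\hat b_r\|_\infty}{1-\|\alpha\|_\infty}.$$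
   Context: $I=[x_0,x_N]$, $I_i=[x_{i-1},x_i]$, $l_i:I\to I_i$ the affine bijection $l_i(x)=\frac{x_i-x_{i-1}}{x_N-x_0}x+\frac{x_Nx_{i-1}-x_0x_i}{x_N-x_0}$, $Q_i=l_i^{-1}$. Scaling functions $\alpha_{i,r}:I\to\mathbb{R}$ ($i=1,\dots,N$, $r\in\mathbb{N}$) are continuous with $\|\alpha\|_\infty:=\sup_r\max_i\|\alpha_{i,r}\|_\infty<1$. Non-stationary $\alpha$-fractal function of $f\in C(I)$ with base functions $b=\{b_r\}$ (continuous, $b_r(x_0)=f(x_0)$, $b_r(x_N)=f(x_N)$, $\sup_r\|b_r\|_\infty<\infty$): with $C_f(I)=\{g\in C(I):g(x_0)=f(x_0),g(x_N)=f(x_N)\}$ and $(T^{\alpha_r}g)(x)=f(x)+\alpha_{i,r}(Q_i(x))(g-b_r)(Q_i(x))$ for $x\in I_i$, it is the uniform limit, independent of $g\in C_f(I)$, of $T^{\alpha_1}\circ\cdots\circ T^{\alpha_r}g$ as $r\to\infty$. (It interpolates the points $(x_i,f(x_i))$.) *)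

theory Defs
  imports "HOL-Analysis.Analysis"
begin

definition ns_I :: "(nat \<Rightarrow> real) \<Rightarrow> nat \<Rightarrow> real set" where
  "ns_I x N = {x 0 .. x N}"

text \<open>Q_i = inverse of the affine map l_i from I onto I_i = [x (i-1), x i].\<close>
definition ns_Q :: "(nat \<Rightarrow> real) \<Rightarrow> nat \<Rightarrow> nat \<Rightarrow> real \<Rightarrow> real" where
  "ns_Q x N i t = x 0 + (x N - x 0) * (t - x (i - 1)) / (x i - x (i - 1))"

text \<open>Index i of a subinterval I_i containing t (the smallest one; at interior
  nodes both choices give the same value of the operator on C_f(I)).\<close>
definition ns_idx :: "(nat \<Rightarrow> real) \<Rightarrow> real \<Rightarrow> nat" where
  "ns_idx x t = (LEAST i. 1 \<le> i \<and> t \<le> x i)"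

definition ns_T :: "(nat \<Rightarrow> real) \<Rightarrow> nat \<Rightarrow> (real \<Rightarrow> real) \<Rightarrow> (nat \<Rightarrow> real \<Rightarrow> real)
    \<Rightarrow> (nat \<Rightarrow> nat \<Rightarrow> real \<Rightarrow> real) \<Rightarrow> nat \<Rightarrow> (real \<Rightarrow> real) \<Rightarrow> real \<Rightarrow> real" where
  "ns_T x N f b \<alpha> r g t =
     (let i = ns_idx x t; q = ns_Q x N i t in f t + \<alpha> i r q * (g q - b r q))"

text \<open>ns_iter r g = (T^{alpha_1} o ... o T^{alpha_r}) g.\<close>
fun ns_iter :: "(nat \<Rightarrow> real) \<Rightarrow> nat \<Rightarrow> (real \<Rightarrow> real) \<Rightarrow> (nat \<Rightarrow> real \<Rightarrow> real)
    \<Rightarrow> (nat \<Rightarrow> nat \<Rightarrow> real \<Rightarrow> real) \<Rightarrow> nat \<Rightarrow> (real \<Rightarrow> real) \<Rightarrow> real \<Rightarrow> real" where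
  "ns_iter x N f b \<alpha> 0 g = g"
| "ns_iter x N f b \<alpha> (Suc n) g = ns_iter x N f b \<alpha> n (ns_T x N f b \<alpha> (Suc n) g)"

definition ns_Cf :: "(nat \<Rightarrow> real) \<Rightarrow> nat \<Rightarrow> (real \<Rightarrow> real) \<Rightarrow> (real \<Rightarrow> real) set" where
  "ns_Cf x N f = {g. continuous_on (ns_I x N) g \<and> g (x 0) = f (x 0) \<and> g (x N) = f (x N)}"

definition is_ns_fractal :: "(nat \<Rightarrow> real) \<Rightarrow> nat \<Rightarrow> (real \<Rightarrow> real) \<Rightarrow> (nat \<Rightarrow> real \<Rightarrow> real)
    \<Rightarrow> (nat \<Rightarrow> nat \<Rightarrow> real \<Rightarrow> real) \<Rightarrow> (real \<Rightarrow> real) \<Rightarrow> bool" where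
  "is_ns_fractal x N f b \<alpha> \<phi> \<longleftrightarrow>
     (\<forall>g \<in> ns_Cf x N f. uniform_limit (ns_I x N) (\<lambda>r. ns_iter x N f b \<alpha> r g) \<phi> sequentially)"

definition sup_norm_on :: "real set \<Rightarrow> (real \<Rightarrow> real) \<Rightarrow> real" where
  "sup_norm_on S g = Sup ((\<lambda>t. \<bar>g t\<bar>) ` S)"

definition alpha_vals :: "(nat \<Rightarrow> real) \<Rightarrow> nat \<Rightarrow> (nat \<Rightarrow> nat \<Rightarrow> real \<Rightarrow> real) \<Rightarrow> real set" where
  "alpha_vals x N \<alpha> = {sup_norm_on (ns_I x N) (\<alpha> i r) | i r. 1 \<le> i \<and> i \<le> N \<and> 1 \<le> r}"

definition alpha_norm :: "(nat \<Rightarrow> real) \<Rightarrow> nat \<Rightarrow> (nat \<Rightarrow> nat \<Rightarrow> real \<Rightarrow> real) \<Rightarrow> real" where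
  "alpha_norm x N \<alpha> = Sup (alpha_vals x N \<alpha>)"

end

theory Submission
  imports Defs
begin

lemma sn_upper:
  assumes "continuous_on {a..c::real} g" "t \<in> {a..c}"
  shows "\<bar>g t\<bar> \<le> sup_norm_on {a..c} g"
proof -
  have "continuous_on {a..c} (\<lambda>t. \<bar>g t\<bar>)" using assms(1) by (intro continuous_intros)
  then have "compact ((\<lambda>t. \<bar>g t\<bar>) ` {a..c})" by (intro compact_continuous_image) auto
  then have "bdd_above ((\<lambda>t. \<bar>g t\<bar>) ` {a..c})" by (intro bounded_imp_bdd_above compact_imp_bounded)
  then show ?thesis unfolding sup_norm_on_def using assms(2) by (intro cSup_upper) auto
qed

lemma x_mono:
  assumes incr: "\<And>i. i < N \<Longrightarrow> x i < x (Suc i)"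
  shows "i \<le> j \<Longrightarrow> j \<le> N \<Longrightarrow> (x i :: real) \<le> x j"
proof (induction j)
  case 0 then show ?case by simp
next
  case (Suc j)
  show ?case
  proof (cases "i = Suc j")
    case False
    then have "x i \<le> x j" using Suc by auto
    also have "x j < x (Suc j)" using incr Suc by auto
    finally show ?thesis by simp
  qed simp
qed

lemma idx_prop:
  assumes N: "1 \<le> N" and incr: "\<And>i. i < N \<Longrightarrow> x i < x (Suc i)"
    and t: "t \<in> {x 0 .. x N}"
  shows "1 \<le> ns_idx x t \<and> ns_idx x t \<le> N \<and> x (ns_idx x t - 1) \<le> t \<and> t \<le> x (ns_idx x t)"
proof -
  let ?P = "\<lambda>i. 1 \<le> i \<and> t \<le> x i"
  have PN: "?P N" using N t by auto
  have P: "?P (ns_idx x t)" unfolding ns_idx_def using PN by (rule LeastI)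
  have le: "ns_idx x t \<le> N" unfolding ns_idx_def using PN by (rule Least_le)
  have lo: "x (ns_idx x t - 1) \<le> t"
  proof (cases "ns_idx x t = 1")
    case True then show ?thesis using t by simp
  next
    case False
    then have "ns_idx x t - 1 < ns_idx x t" "1 \<le> ns_idx x t - 1" using P by auto
    then have "\<not> ?P (ns_idx x t - 1)" unfolding ns_idx_def using not_less_Least by blast
    then show ?thesis using \<open>1 \<le> ns_idx x t - 1\<close> by auto
  qed
  show ?thesis using P le lo by auto
qed

lemma Q_in:
  assumes N: "1 \<le> N" and incr: "\<And>i. i < N \<Longrightarrow> x i < x (Suc i)"
    and t: "t \<in> {x 0 .. x N}"
  shows "ns_Q x N (ns_idx x t) t \<in> {x 0 .. x N}"
proof -
  define i where "i = ns_idx x t"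
  have ip: "1 \<le> i" "i \<le> N" "x (i - 1) \<le> t" "t \<le> x i"
    using idx_prop[OF N incr t] unfolding i_def by auto
  have d: "x (i - 1) < x i" using incr[of "i - 1"] ip by auto
  have x0N: "x 0 \<le> x N" using x_mono[where N=N and x=x and i=0 and j=N, OF incr] by simp
  define s where "s = (t - x (i - 1)) / (x i - x (i - 1))"
  have s: "0 \<le> s" "s \<le> 1" unfolding s_def using d ip by (auto simp: divide_simps)
  have "ns_Q x N i t = x 0 + (x N - x 0) * s" unfolding ns_Q_def s_def by simp
  moreover have "0 \<le> (x N - x 0) * s" "(x N - x 0) * s \<le> x N - x 0"
    using s x0N by (auto intro: mult_left_le)
  ultimately show ?thesis unfolding i_def by auto
qed

theorem mainTheorem8:
  fixes x :: "nat \<Rightarrow> real" and N :: nat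
    and f fh :: "real \<Rightarrow> real"
    and b bh :: "nat \<Rightarrow> real \<Rightarrow> real"
    and \<alpha> :: "nat \<Rightarrow> nat \<Rightarrow> real \<Rightarrow> real"
    and \<phi> \<psi> :: "real \<Rightarrow> real"
  assumes N: "1 \<le> N"
    and incr: "\<And>i. i < N \<Longrightarrow> x i < x (Suc i)"
    and f_cont: "continuous_on (ns_I x N) f"
    and fh_cont: "continuous_on (ns_I x N) fh"
    and b_cont: "\<And>r. 1 \<le> r \<Longrightarrow> continuous_on (ns_I x N) (b r)"
    and bh_cont: "\<And>r. 1 \<le> r \<Longrightarrow> continuous_on (ns_I x N) (bh r)"
    and b_end: "\<And>r. 1 \<le> r \<Longrightarrow> b r (x 0) = f (x 0) \<and> b r (x N) = f (x N)"
    and bh_end: "\<And>r. 1 \<le> r \<Longrightarrow> bh r (x 0) = fh (x 0) \<and> bh r (x N) = fh (x N)"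
    and b_bdd: "\<exists>M. \<forall>r\<ge>1. \<forall>t\<in>ns_I x N. \<bar>b r t\<bar> \<le> M"
    and bh_bdd: "\<exists>M. \<forall>r\<ge>1. \<forall>t\<in>ns_I x N. \<bar>bh r t\<bar> \<le> M"
    and \<alpha>_cont: "\<And>i r. 1 \<le> i \<Longrightarrow> i \<le> N \<Longrightarrow> 1 \<le> r \<Longrightarrow> continuous_on (ns_I x N) (\<alpha> i r)"
    and \<alpha>_bdd: "bdd_above (alpha_vals x N \<alpha>)"
    and \<alpha>_lt1: "alpha_norm x N \<alpha> < 1"
    and \<phi>: "is_ns_fractal x N f b \<alpha> \<phi>"
    and \<psi>: "is_ns_fractal x N fh bh \<alpha> \<psi>"
  shows "sup_norm_on (ns_I x N) (\<lambda>t. \<phi> t - \<psi> t)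
    \<le> (sup_norm_on (ns_I x N) (\<lambda>t. f t - fh t)
        + alpha_norm x N \<alpha> * (SUP r\<in>{1..}. sup_norm_on (ns_I x N) (\<lambda>t. b r t - bh r t)))
      / (1 - alpha_norm x N \<alpha>)"
proof -
  define I where "I = ns_I x N"
  have I_def': "I = {x 0 .. x N}" unfolding I_def ns_I_def by simp
  define A where "A = alpha_norm x N \<alpha>"
  define F where "F = sup_norm_on I (\<lambda>t. f t - fh t)"
  define B where "B = (SUP r\<in>{1..}. sup_norm_on I (\<lambda>t. b r t - bh r t))"
  have x0N: "x 0 \<le> x N" using x_mono[where N=N and x=x and i=0 and j=N, OF incr] by simp
  have x0I: "x 0 \<in> I" using x0N I_def' by simp
  have fF: "\<bar>f t - fh t\<bar> \<le> F" if "t \<in> I" for t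
    unfolding F_def I_def' using that f_cont fh_cont unfolding I_def' I_def[symmetric]
    by (intro sn_upper continuous_intros) auto
  have F0: "0 \<le> F" using fF[OF x0I] by simp
  have aA: "\<bar>\<alpha> i r q\<bar> \<le> A" if "1 \<le> i" "i \<le> N" "1 \<le> r" "q \<in> I" for i r q
  proof -
    have "\<bar>\<alpha> i r q\<bar> \<le> sup_norm_on I (\<alpha> i r)"
      using that \<alpha>_cont[OF that(1-3)] unfolding I_def' I_def[symmetric]
      by (intro sn_upper) (auto simp: I_def')
    also have "\<dots> \<le> A" unfolding A_def alpha_norm_def
      using that \<alpha>_bdd by (intro cSup_upper) (auto simp: alpha_vals_def I_def)
    finally show ?thesis .
  qed
  have A0: "0 \<le> A" using aA[OF order_refl N order_refl x0I] by (smt (verit) abs_ge_zero)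
  obtain Mb where Mb: "\<forall>r\<ge>1. \<forall>t\<in>I. \<bar>b r t\<bar> \<le> Mb" using b_bdd I_def by auto
  obtain Mh where Mh: "\<forall>r\<ge>1. \<forall>t\<in>I. \<bar>bh r t\<bar> \<le> Mh" using bh_bdd I_def by auto
  have bddB: "bdd_above ((\<lambda>r. sup_norm_on I (\<lambda>t. b r t - bh r t)) ` {1..})"
  proof (rule bdd_aboveI2)
    fix r :: nat assume r: "r \<in> {1..}"
    show "sup_norm_on I (\<lambda>t. b r t - bh r t) \<le> Mb + Mh"
      unfolding sup_norm_on_def
    proof (rule cSup_least)
      show "(\<lambda>t. \<bar>b r t - bh r t\<bar>) ` I \<noteq> {}" using x0I by auto
    next
      fix v assume "v \<in> (\<lambda>t. \<bar>b r t - bh r t\<bar>) ` I"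
      then obtain t where "t \<in> I" "v = \<bar>b r t - bh r t\<bar>" by auto
      then show "v \<le> Mb + Mh" using Mb Mh r by (smt (verit, best) atLeast_iff)
    qed
  qed
  have bB: "\<bar>b r q - bh r q\<bar> \<le> B" if "1 \<le> r" "q \<in> I" for r q
  proof -
    have "\<bar>b r q - bh r q\<bar> \<le> sup_norm_on I (\<lambda>t. b r t - bh r t)"
      using that b_cont[OF that(1)] bh_cont[OF that(1)] unfolding I_def[symmetric] I_def'
      by (intro sn_upper continuous_intros) (auto simp: I_def')
    also have "\<dots> \<le> B" unfolding B_def using that bddB by (intro cSUP_upper) auto
    finally show ?thesis .
  qed
  have B0: "0 \<le> B" using bB[OF order_refl x0I] by (smt (verit) abs_ge_zero)
  define D where "D = (F + A * B) / (1 - A)"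
  have A1: "A < 1" using \<alpha>_lt1 A_def by simp
  have DD: "F + A * (D + B) = D" unfolding D_def using A1 by (simp add: field_simps)
  have FD: "F \<le> D" unfolding D_def using A1 A0 B0 F0
    by (simp add: divide_simps) (smt (verit, best) mult_nonneg_nonneg mult_left_le)
  have step: "\<bar>ns_T x N f b \<alpha> r g t - ns_T x N fh bh \<alpha> r h t\<bar> \<le> D"
    if r: "1 \<le> r" and gh: "\<forall>t\<in>I. \<bar>g t - h t\<bar> \<le> D" and t: "t \<in> I" for r g h t
  proof -
    define i where "i = ns_idx x t"
    define q where "q = ns_Q x N i t"
    have ip: "1 \<le> i" "i \<le> N" using idx_prop[where x=x and N=N and t=t, OF N incr] t I_def' i_def by auto
    have q: "q \<in> I" using Q_in[where x=x and N=N and t=t, OF N incr] t I_def' i_def q_def by auto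
    have "ns_T x N f b \<alpha> r g t - ns_T x N fh bh \<alpha> r h t
        = (f t - fh t) + \<alpha> i r q * ((g q - h q) - (b r q - bh r q))"
      unfolding ns_T_def Let_def i_def[symmetric] q_def[symmetric] by (simp add: algebra_simps)
    also have "\<bar>\<dots>\<bar> \<le> \<bar>f t - fh t\<bar> + \<bar>\<alpha> i r q\<bar> * \<bar>(g q - h q) - (b r q - bh r q)\<bar>"
      by (metis abs_mult abs_triangle_ineq)
    also have "\<dots> \<le> F + A * (D + B)"
    proof (intro add_mono mult_mono)
      show "\<bar>f t - fh t\<bar> \<le> F" using fF t by simp
      show "\<bar>\<alpha> i r q\<bar> \<le> A" using aA ip r q by simp
      show "\<bar>(g q - h q) - (b r q - bh r q)\<bar> \<le> D + B"
        using gh q bB[OF r q] by (smt (verit))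
    qed (use A0 in auto)
    finally show ?thesis using DD by simp
  qed
  have iter: "\<forall>g h. (\<forall>t\<in>I. \<bar>g t - h t\<bar> \<le> D) \<longrightarrow>
     (\<forall>t\<in>I. \<bar>ns_iter x N f b \<alpha> n g t - ns_iter x N fh bh \<alpha> n h t\<bar> \<le> D)" for n
  proof (induction n)
    case 0 then show ?case by simp
  next
    case (Suc n)
    show ?case
    proof (intro allI impI)
      fix g h assume gh: "\<forall>t\<in>I. \<bar>g t - h t\<bar> \<le> D"
      have "\<forall>t\<in>I. \<bar>ns_T x N f b \<alpha> (Suc n) g t - ns_T x N fh bh \<alpha> (Suc n) h t\<bar> \<le> D"
        using step[OF _ gh] by simp
      then show "\<forall>t\<in>I. \<bar>ns_iter x N f b \<alpha> (Suc n) g t - ns_iter x N fh bh \<alpha> (Suc n) h t\<bar> \<le> D"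
        using Suc by simp
    qed
  qed
  have fC: "f \<in> ns_Cf x N f" using f_cont unfolding ns_Cf_def by simp
  have fhC: "fh \<in> ns_Cf x N fh" using fh_cont unfolding ns_Cf_def by simp
  have ul1: "uniform_limit I (\<lambda>r. ns_iter x N f b \<alpha> r f) \<phi> sequentially"
    using \<phi> fC unfolding is_ns_fractal_def I_def by blast
  have ul2: "uniform_limit I (\<lambda>r. ns_iter x N fh bh \<alpha> r fh) \<psi> sequentially"
    using \<psi> fhC unfolding is_ns_fractal_def I_def by blast
  have pt: "\<bar>\<phi> t - \<psi> t\<bar> \<le> D" if t: "t \<in> I" for t
  proof -
    have l1: "(\<lambda>r. ns_iter x N f b \<alpha> r f t) \<longlonglongrightarrow> \<phi> t"
      using tendsto_uniform_limitI[OF ul1 t] .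
    have l2: "(\<lambda>r. ns_iter x N fh bh \<alpha> r fh t) \<longlonglongrightarrow> \<psi> t"
      using tendsto_uniform_limitI[OF ul2 t] .
    have "(\<lambda>r. \<bar>ns_iter x N f b \<alpha> r f t - ns_iter x N fh bh \<alpha> r fh t\<bar>) \<longlonglongrightarrow> \<bar>\<phi> t - \<psi> t\<bar>"
      by (intro tendsto_intros l1 l2)
    moreover have "\<forall>r. \<bar>ns_iter x N f b \<alpha> r f t - ns_iter x N fh bh \<alpha> r fh t\<bar> \<le> D"
      using iter fF FD t by (meson order_trans)
    ultimately show ?thesis by (intro tendsto_upperbound) (auto intro: always_eventually)
  qed
  have "sup_norm_on I (\<lambda>t. \<phi> t - \<psi> t) \<le> D"
    unfolding sup_norm_on_def using pt x0I by (intro cSup_least) auto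
  then show ?thesis unfolding D_def F_def A_def B_def I_def .
qed

end
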